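(* Let $k_1=2$ and $k_{i+1}=\big(\prod_{j\le i}k_j\big)+1$ (the Sylvester sequence), let $c$ be a positive integer and $\epsilon:=1/\prod_{\ell=1}^c k_\ell$. Define $\vec s\in[0,1]^{c+1}$ by $s_i=\frac{1}{k_i}(1-\frac{\epsilon}{2})$ for $i\in[c]$ and $s_{c+1}=\epsilon(\frac32-\frac{\epsilon}{2})$. Let $\vec\chi\in\mathbb{N}^{c+1}$ satisfy $\vec\chi\cdot\vec s\le 1$. Then: (a) if $\chi_{c+1}=1$ and $\vec\chi\ne\vec 1$, then $\vec\chi\cdot\vec s\le 1-\epsilon/2$; (b) if $\chi_{c+1}=0$, then $\vec\chi\cdot\vec s\le 1-\epsilon/2$; (c) if $\chi_{c+1}=0$ and $\vec\chi\ne k_i\vec e_i$ for every $i\in[c]$, then $\vec\chi\cdot\vec s\le 1-\epsilon$.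
   Context: $\vec 1$ denotes the all-ones vector in $\mathbb{R}^{c+1}$ and $\vec e_i$ the $i$-th standard basis vector. $\vec\chi$ is interpreted as the characteristic vector of a feasibly packed unit bin ($\chi_i$ = number of items of size $s_i$ in it). *)

theory Defs
  imports "HOL-Analysis.Analysis"
begin

text \<open>Sylvester sequence, 1-indexed: k 1 = 2, k (i+1) = (prod_{j=1..i} k j) + 1.
  The value at index 0 is irrelevant (set to 1 by the same formula, empty product).\<close>
function sylvester :: "nat \<Rightarrow> nat" where
  "sylvester n = (if n = 1 then 2 else (\<Prod>j\<in>{1..<n}. sylvester j) + 1)"
  by auto
termination
  by (relation "Wellfounded.measure id") auto

text \<open>Vectors in R^{c+1} are represented as functions on indices 1..c+1.\<close>
definition sizes :: "nat \<Rightarrow> nat \<Rightarrow> real" where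
  "sizes c i = (let eps = 1 / (\<Prod>l=1..c. real (sylvester l)) in
     if i = c + 1 then eps * (3/2 - eps/2) else (1 / real (sylvester i)) * (1 - eps/2))"

definition dotp :: "nat \<Rightarrow> (nat \<Rightarrow> nat) \<Rightarrow> real" where
  "dotp c x = (\<Sum>i=1..c+1. real (x i) * sizes c i)"

end

theory Submission
  imports Defs
begin

declare sylvester.simps [simp del]

definition Pr :: "nat \<Rightarrow> nat" where "Pr c = (\<Prod>l=1..c. sylvester l)"

lemma syl_Suc: "sylvester (Suc c) = Pr c + 1"
proof (cases "c = 0")
  case True thus ?thesis by (simp add: Pr_def sylvester.simps)
next
  case False
  have "{1..<Suc c} = {1..c}" by auto
  thus ?thesis using False by (subst sylvester.simps) (simp add: Pr_def)
qed

lemma syl_pos: "sylvester n > 0"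
  by (subst sylvester.simps) auto

lemma Pr_pos: "Pr c > 0"
  unfolding Pr_def using syl_pos by (simp add: prod_pos)

lemma Pr_Suc: "Pr (Suc c) = Pr c * (Pr c + 1)"
  unfolding Pr_def by (simp add: syl_Suc[unfolded Pr_def])

lemma syl_dvd: "i \<in> {1..c} \<Longrightarrow> sylvester i dvd Pr c"
  unfolding Pr_def by (rule dvd_prodI) auto

definition mm :: "nat \<Rightarrow> (nat \<Rightarrow> nat) \<Rightarrow> nat" where
  "mm c x = (\<Sum>i=1..c. x i * (Pr c div sylvester i))"

lemma mm_Suc: "mm (Suc c) x = mm c x * (Pr c + 1) + x (Suc c) * Pr c"
proof -
  have "mm (Suc c) x = (\<Sum>i=1..c. x i * (Pr (Suc c) div sylvester i)) + x (Suc c) * (Pr (Suc c) div sylvester (Suc c))"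
    unfolding mm_def by simp
  also have "(\<Sum>i=1..c. x i * (Pr (Suc c) div sylvester i)) = (\<Sum>i=1..c. x i * (Pr c div sylvester i)) * (Pr c + 1)"
    unfolding sum_distrib_right
  proof (rule sum.cong)
    fix i assume "i \<in> {1..c}"
    then have "sylvester i dvd Pr c" by (rule syl_dvd)
    then have "Pr (Suc c) div sylvester i = (Pr c div sylvester i) * (Pr c + 1)"
      unfolding Pr_Suc by (simp add: div_mult_swap mult.commute)
    thus "x i * (Pr (Suc c) div sylvester i) = x i * (Pr c div sylvester i) * (Pr c + 1)" by (simp only: mult.assoc)
  qed simp
  also have "Pr (Suc c) div sylvester (Suc c) = Pr c"
    unfolding Pr_Suc syl_Suc by (rule nonzero_mult_div_cancel_right) simp
  finally show ?thesis unfolding mm_def by simp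
qed

lemma zero_lemma: "(q::int) > 0 \<Longrightarrow> -q < q*t \<Longrightarrow> q*t < q \<Longrightarrow> t = 0"
proof (rule ccontr)
  assume a: "q > 0" "-q < q*t" "q*t < q" "t \<noteq> 0"
  show False
  proof (cases "t \<ge> 1")
    case True then have "q*t \<ge> q*1" using a by (intro mult_left_mono) auto
    thus False using a by linarith
  next
    case False then have "t \<le> -1" using a by simp
    then have "q*t \<le> q*(-1)" using a by (intro mult_left_mono) auto
    thus False using a by linarith
  qed
qed

lemma lemA: "mm c x + 1 = Pr c \<Longrightarrow> \<forall>i\<in>{1..c}. x i = 1"
proof (induction c)
  case 0 thus ?case by simp
next
  case (Suc c)
  define S where "S = int (mm c x)"
  define P where "P = int (Pr c)"
  define y where "y = int (x (Suc c))"
  have P1: "P \<ge> 1" using Pr_pos[of c] unfolding P_def by simp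
  have S0: "S \<ge> 0" "y \<ge> 0" unfolding S_def y_def by auto
  have eq: "S * (P+1) + y * P + 1 = P * (P+1)"
    using arg_cong[OF Suc.prems[unfolded mm_Suc Pr_Suc], of int] unfolding S_def P_def y_def by (simp add: algebra_simps)
  have e2: "(P+1) * (S + y - P) = y - 1" using eq by (simp add: algebra_simps)
  have "S * (P+1) \<ge> 0" using S0 P1 by simp
  then have "y * P < (P+1) * P" using eq by (simp add: algebra_simps)
  then have "y < P + 1" using P1 by (simp add: mult_less_cancel_right)
  then have "S + y - P = 0" using e2 S0 P1
    by (intro zero_lemma[of "P+1"]) auto
  then have y1: "y = 1" using e2 by simp
  then have "(P+1) * S = (P+1) * (P - 1)" using eq by (simp add: algebra_simps)
  then have "S = P - 1" using P1 by simp
  then have "mm c x + 1 = Pr c" unfolding S_def P_def by simp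
  then have "\<forall>i\<in>{1..c}. x i = 1" by (rule Suc.IH)
  moreover have "x (Suc c) = 1" using y1 unfolding y_def by simp
  ultimately show ?case by (auto simp: le_Suc_eq)
qed

lemma lemB: "mm c x = Pr c \<Longrightarrow> \<exists>i\<in>{1..c}. \<forall>j\<in>{1..c}. x j = (if j = i then sylvester i else 0)"
proof (induction c)
  case 0 thus ?case by (simp add: mm_def Pr_def)
next
  case (Suc c)
  define S where "S = int (mm c x)"
  define P where "P = int (Pr c)"
  define y where "y = int (x (Suc c))"
  have P1: "P \<ge> 1" using Pr_pos[of c] unfolding P_def by simp
  have S0: "S \<ge> 0" "y \<ge> 0" unfolding S_def y_def by auto
  have eq: "S * (P+1) + y * P = P * (P+1)"
    using arg_cong[OF Suc.prems[unfolded mm_Suc Pr_Suc], of int] unfolding S_def P_def y_def by (simp add: algebra_simps)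
  have e2: "(P+1) * (S + y - P) = y" using eq by (simp add: algebra_simps)
  have "S * (P+1) \<ge> 0" using S0 P1 by simp
  then have "y * P \<le> (P+1) * P" using eq by (simp add: algebra_simps)
  then have yle: "y \<le> P + 1" using P1 by (simp add: mult_le_cancel_right)
  have "(P+1) * (S + y - P - 1) = y - (P+1)" using e2 by (simp add: algebra_simps)
  have "S + y - P = 0 \<or> S + y - P = 1"
  proof -
    have "2*(P+1)*(S+y-P) - (P+1) = 2*y - (P+1)" using e2 by (simp add: algebra_simps)
    then have "(P+1)*(2*(S+y-P) - 1) = 2*y - (P+1)" by (simp add: algebra_simps)
    moreover have "-(P+1) \<le> 2*y - (P+1)" "2*y - (P+1) \<le> P+1" using S0 yle by auto
    ultimately have h: "-(P+1) \<le> (P+1)*(2*(S+y-P) - 1)" "(P+1)*(2*(S+y-P) - 1) \<le> P+1" by auto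
    have "2*(S+y-P) - 1 \<le> 1"
    proof (rule ccontr)
      assume "\<not> ?thesis" then have "2*(S+y-P) - 1 \<ge> 2" by simp
      then have "(P+1)*(2*(S+y-P) - 1) \<ge> (P+1)*2" using P1 by (intro mult_left_mono) auto
      moreover have "(P+1)*2 = 2*P+2" "(P+1)*(-2) = -2*P-2" by simp_all
      ultimately show False using h P1 by linarith
    qed
    moreover have "2*(S+y-P) - 1 \<ge> -1"
    proof (rule ccontr)
      assume "\<not> ?thesis" then have "2*(S+y-P) - 1 \<le> -2" by simp
      then have "(P+1)*(2*(S+y-P) - 1) \<le> (P+1)*(-2)" using P1 by (intro mult_left_mono) auto
      moreover have "(P+1)*2 = 2*P+2" "(P+1)*(-2) = -2*P-2" by simp_all
      ultimately show False using h P1 by linarith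
    qed
    ultimately show ?thesis by presburger
  qed
  then show ?case
  proof
    assume "S + y - P = 0"
    then have y0: "y = 0" using e2 by simp
    then have "S = P" using eq P1 by simp
    then have "mm c x = Pr c" unfolding S_def P_def by simp
    then obtain i where i: "i \<in> {1..c}" "\<forall>j\<in>{1..c}. x j = (if j = i then sylvester i else 0)"
      using Suc.IH by blast
    have "x (Suc c) = 0" using y0 unfolding y_def by simp
    then have "\<forall>j\<in>{1..Suc c}. x j = (if j = i then sylvester i else 0)"
      using i by (auto simp: le_Suc_eq)
    thus ?case using i by auto
  next
    assume "S + y - P = 1"
    then have y1: "y = P + 1" using e2 by simp
    then have "S * (P+1) = 0" using eq by (simp add: algebra_simps)
    then have "S = 0" using P1 by simp
    then have "mm c x = 0" unfolding S_def by simp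
    then have z: "\<forall>j\<in>{1..c}. x j * (Pr c div sylvester j) = 0" unfolding mm_def by simp
    have "\<forall>j\<in>{1..c}. x j = 0"
    proof
      fix j assume j: "j \<in> {1..c}"
      have "Pr c div sylvester j > 0" using syl_dvd[OF j] Pr_pos[of c] syl_pos[of j]
        by (metis dvd_div_eq_0_iff gr0I less_numeral_extra(3))
      moreover have "x j * (Pr c div sylvester j) = 0" using z j by blast
      ultimately show "x j = 0" by simp
    qed
    moreover have "x (Suc c) = sylvester (Suc c)" using y1 unfolding y_def P_def syl_Suc by simp
    ultimately have "\<forall>j\<in>{1..Suc c}. x j = (if j = Suc c then sylvester (Suc c) else 0)"
      by (auto simp: le_Suc_eq)
    thus ?case by auto
  qed
qed


lemma sum_real: "(\<Sum>i=1..c. real (x i) / real (sylvester i)) = real (mm c x) / real (Pr c)"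
proof -
  have "real (mm c x) = (\<Sum>i=1..c. real (x i) * (real (Pr c) / real (sylvester i)))"
    unfolding mm_def of_nat_sum
  proof (rule sum.cong)
    fix i assume "i \<in> {1..c}"
    then have "sylvester i dvd Pr c" by (rule syl_dvd)
    then show "real (x i * (Pr c div sylvester i)) = real (x i) * (real (Pr c) / real (sylvester i))"
      by (simp add: real_of_nat_div)
  qed simp
  also have "\<dots> = (\<Sum>i=1..c. real (x i) / real (sylvester i)) * real (Pr c)"
    unfolding sum_distrib_right by (rule sum.cong) auto
  finally show ?thesis using Pr_pos[of c] by simp
qed

lemma Pr_ge2: "c \<ge> 1 \<Longrightarrow> Pr c \<ge> 2"
proof (induction c)
  case 0 thus ?case by simp
next
  case (Suc c)
  have "Pr (Suc c) = Pr c * (Pr c + 1)" by (rule Pr_Suc)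
  moreover have "Pr c \<ge> 1" using Pr_pos[of c] by simp
  ultimately have "Pr (Suc c) \<ge> 1 * (1 + 1)" by (metis add_mono mult_mono' le_refl zero_le)
  thus ?case by simp
qed

lemma dotp_eq:
  "dotp c x = (real (mm c x) / real (Pr c)) * (1 - (1 / real (Pr c))/2)
     + real (x (c+1)) * ((1 / real (Pr c)) * (3/2 - (1 / real (Pr c))/2))"
proof -
  have pe: "(\<Prod>l=1..c. real (sylvester l)) = real (Pr c)" by (simp only: Pr_def of_nat_prod)
  have "dotp c x = (\<Sum>i=1..c. real (x i) * sizes c i) + real (x (c+1)) * sizes c (c+1)"
    unfolding dotp_def by simp
  also have "(\<Sum>i=1..c. real (x i) * sizes c i) = (\<Sum>i=1..c. real (x i) / real (sylvester i)) * (1 - (1 / real (Pr c))/2)"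
    unfolding sum_distrib_right
  proof (rule sum.cong)
    fix i assume "i \<in> {1..c}"
    then have "i \<noteq> c+1" by auto
    then show "real (x i) * sizes c i = real (x i) / real (sylvester i) * (1 - (1 / real (Pr c))/2)"
      unfolding sizes_def Let_def pe by simp
  qed simp
  also have "sizes c (c+1) = (1 / real (Pr c)) * (3/2 - (1 / real (Pr c))/2)"
    unfolding sizes_def Let_def pe by simp
  finally show ?thesis unfolding sum_real .
qed

theorem lemmaD2:
  fixes c :: nat and x :: "nat \<Rightarrow> nat"
  defines "\<epsilon> \<equiv> 1 / (\<Prod>l=1..c. real (sylvester l))"
  assumes "c \<ge> 1"
    and "dotp c x \<le> 1"
  shows "(x (c+1) = 1 \<and> \<not> (\<forall>i\<in>{1..c+1}. x i = 1) \<longrightarrow> dotp c x \<le> 1 - \<epsilon>/2)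
    \<and> (x (c+1) = 0 \<longrightarrow> dotp c x \<le> 1 - \<epsilon>/2)
    \<and> (x (c+1) = 0 \<and> (\<forall>i\<in>{1..c}. \<not> (\<forall>j\<in>{1..c+1}. x j = (if j = i then sylvester i else 0)))
           \<longrightarrow> dotp c x \<le> 1 - \<epsilon>)"
proof -
  define p where "p = real (Pr c)"
  define M where "M = real (mm c x)"
  define X where "X = real (x (c+1))"
  have p2: "p \<ge> 2" using Pr_ge2[OF assms(2)] unfolding p_def by simp
  have eps: "\<epsilon> = 1 / p" unfolding \<epsilon>_def p_def Pr_def by simp
  have key: "dotp c x = (M*(2*p-1) + X*(3*p-1)) / (2*p^2)"
    unfolding dotp_eq M_def[symmetric] X_def[symmetric] p_def[symmetric] using p2
    by (simp add: field_simps power2_eq_square)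
  define N where "N = M*(2*p-1) + X*(3*p-1)"
  have pp: "2*p^2 > 0" using p2 by simp
  have N1: "N \<le> 2*p^2" using assms(3) pp unfolding key N_def[symmetric] by (simp add: divide_le_eq)
  have g1: "dotp c x \<le> 1 - \<epsilon>/2" if "N \<le> 2*p^2 - p"
  proof -
    have "1 - \<epsilon>/2 = (2*p^2 - p) / (2*p^2)" unfolding eps using p2 by (simp add: field_simps power2_eq_square)
    thus ?thesis unfolding key N_def[symmetric] using that pp by (simp add: divide_right_mono)
  qed
  have g2: "dotp c x \<le> 1 - \<epsilon>" if "N \<le> 2*p^2 - 2*p"
  proof -
    have "1 - \<epsilon> = (2*p^2 - 2*p) / (2*p^2)" unfolding eps using p2 by (simp add: field_simps power2_eq_square)
    thus ?thesis unfolding key N_def[symmetric] using that pp by (simp add: divide_right_mono)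
  qed
  have M0: "M \<ge> 0" unfolding M_def by simp
  have Mle: "M \<le> p" if "X = 0"
  proof (rule ccontr)
    assume "\<not> M \<le> p"
    then have "mm c x \<ge> Pr c + 1" unfolding M_def p_def by linarith
    then have "M \<ge> p + 1" unfolding M_def p_def by (metis of_nat_1 of_nat_add of_nat_le_iff)
    then have "M*(2*p-1) \<ge> (p+1)*(2*p-1)" using p2 by (intro mult_right_mono) auto
    moreover have "(p+1)*(2*p-1) = 2*p^2 + p - 1" by (simp add: algebra_simps power2_eq_square)
    moreover have "X*(3*p-1) = 0" using that by simp
    ultimately show False using N1 that p2 unfolding N_def by linarith
  qed
  have b: "x (c+1) = 0 \<longrightarrow> dotp c x \<le> 1 - \<epsilon>/2"
  proof
    assume "x (c+1) = 0"
    then have X0: "X = 0" unfolding X_def by simp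
    have "M*(2*p-1) \<le> p*(2*p-1)" using Mle[OF X0] p2 by (intro mult_right_mono) auto
    moreover have "p*(2*p-1) = 2*p^2 - p" by (simp add: algebra_simps power2_eq_square)
    ultimately show "dotp c x \<le> 1 - \<epsilon>/2" using X0 unfolding N_def[symmetric] by (intro g1) (simp add: N_def)
  qed
  have cc: "x (c+1) = 0 \<and> (\<forall>i\<in>{1..c}. \<not> (\<forall>j\<in>{1..c+1}. x j = (if j = i then sylvester i else 0)))
           \<longrightarrow> dotp c x \<le> 1 - \<epsilon>"
  proof
    assume a: "x (c+1) = 0 \<and> (\<forall>i\<in>{1..c}. \<not> (\<forall>j\<in>{1..c+1}. x j = (if j = i then sylvester i else 0)))"
    then have X0: "X = 0" unfolding X_def by simp
    have "mm c x \<noteq> Pr c"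
    proof
      assume "mm c x = Pr c"
      then obtain i where i: "i \<in> {1..c}" "\<forall>j\<in>{1..c}. x j = (if j = i then sylvester i else 0)"
        using lemB by blast
      then have "\<forall>j\<in>{1..c+1}. x j = (if j = i then sylvester i else 0)"
        using a by (auto simp: le_Suc_eq)
      thus False using a i by blast
    qed
    moreover have "mm c x \<le> Pr c" using Mle[OF X0] unfolding M_def p_def by simp
    ultimately have "mm c x + 1 \<le> Pr c" by simp
    then have "M + 1 \<le> p" unfolding M_def p_def by (metis of_nat_1 of_nat_add of_nat_le_iff)
    then have "M*(2*p-1) \<le> (p-1)*(2*p-1)" using p2 by (intro mult_right_mono) auto
    moreover have "(p-1)*(2*p-1) = 2*p^2 - 3*p + 1" by (simp add: algebra_simps power2_eq_square)
    ultimately show "dotp c x \<le> 1 - \<epsilon>" using X0 p2 by (intro g2) (simp add: N_def)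
  qed
  have a: "x (c+1) = 1 \<and> \<not> (\<forall>i\<in>{1..c+1}. x i = 1) \<longrightarrow> dotp c x \<le> 1 - \<epsilon>/2"
  proof
    assume a: "x (c+1) = 1 \<and> \<not> (\<forall>i\<in>{1..c+1}. x i = 1)"
    then have X1: "X = 1" unfolding X_def by simp
    have "mm c x + 1 \<le> Pr c"
    proof (rule ccontr)
      assume "\<not> ?thesis"
      then have "M \<ge> p" unfolding M_def p_def by simp
      then have "M*(2*p-1) \<ge> p*(2*p-1)" using p2 by (intro mult_right_mono) auto
      moreover have "p*(2*p-1) = 2*p^2 - p" by (simp add: algebra_simps power2_eq_square)
      moreover have "X*(3*p-1) = 3*p-1" using X1 by simp
      ultimately show False using N1 X1 p2 unfolding N_def by linarith
    qed
    moreover have "mm c x + 1 \<noteq> Pr c"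
    proof
      assume "mm c x + 1 = Pr c"
      then have "\<forall>i\<in>{1..c}. x i = 1" by (rule lemA)
      then have "\<forall>i\<in>{1..c+1}. x i = 1" using a by (auto simp: le_Suc_eq)
      thus False using a by blast
    qed
    ultimately have "mm c x + 2 \<le> Pr c" by simp
    then have "M + 2 \<le> p" unfolding M_def p_def by (metis of_nat_numeral of_nat_add of_nat_le_iff)
    then have "M*(2*p-1) \<le> (p-2)*(2*p-1)" using p2 by (intro mult_right_mono) auto
    moreover have "(p-2)*(2*p-1) = 2*p^2 - 5*p + 2" by (simp add: algebra_simps power2_eq_square)
    ultimately show "dotp c x \<le> 1 - \<epsilon>/2" using X1 p2 by (intro g1) (simp add: N_def)
  qed
  show ?thesis using a b cc by blast
qed

end
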